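(* Let $\mathcal M\in\{\mathcal M_1,\mathcal M_2,\mathcal M_3,\mathcal M_4\}$ and $n\ge 2$. Then $m_{\mathrm{opt}}(n;\mathcal M)>1$, i.e. there is some $m\in\{2,\dots,n\}$ with $F(m;n)<F(1;n)$.
   Context: Let $n\ge 1$, let $\mathbf X=\{X_1,\dots,X_n\}$ with the uniform probability measure. For $1\le m\le n$ let $\mathcal X_m$ be the set of finite sequences $\chi=(\chi_1,\dots,\chi_\ell)$ of elements of $\mathbf X$ such that $\{\chi_1,\dots,\chi_\ell\}$ has exactly $m$ elements and $\chi_\ell\ne\chi_i$ for all $i<\ell$; write $\ell=\ell(\chi)$, give $\chi$ weight $n^{-\ell(\chi)}$ (this is a probability measure on $\mathcal X_m$), and for $f:\mathcal X_m\to\mathbb R$ write $E_m[f]=\sum_{\chi\in\mathcal X_m}f(\chi)n^{-\ell(\chi)}$. For $\chi\in\mathcal X_m$ and $0\le j\le m$ let $t_j(\chi)$ be the least $t\ge0$ with $|\{\chi_1,\dots,\chi_t\}|=j$ (so $t_0=0$), and for $1\le j\le m-1$ let $\tau_j(\chi)=t_{j+1}(\chi)-t_j(\chi)-1$. Put $b(j)=(1+\frac1j)\log_2(j+1)-1$ ($j\ge1$), $b_f(j)=\log_2(j+1)$ ($j\ge0$), $s(j)=\frac{j+1}2$. The four models specify functions $s_{\mathcal L}(k)$ (cost of a search for an object on the sorted list when the list has $k$ objects), $s_{\mathcal P}(j)$ (cost of a search for an object in the pile when the pile has $j$ objects) and the cleanup cost $C_m$: $\mathcal M_1$: $s_{\mathcal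 L}(k)=b(k)$, $s_{\mathcal P}(j)=b_f(n-j)+s(j)$, $C_m=\sum_{j=1}^m b_f(n-j)$; $\mathcal M_2$: $s_{\mathcal L}(k)=b(n)$, $s_{\mathcal P}(j)=b_f(n)+s(j)$, $C_m=m\,b(n)$; $\mathcal M_3$: $s_{\mathcal L}(k)=b(k)$, $s_{\mathcal P}(j)=s(j)$, $C_m=\sum_{j=1}^m b_f(n-j)$; $\mathcal M_4$: $s_{\mathcal L}(k)=b(n)$, $s_{\mathcal P}(j)=s(j)$, $C_m=m\,b(n)$. The average total cost is $F(m;n)=E_m[1/\ell]\Big(\sum_{j=0}^{m-1}s_{\mathcal L}(n-j)+C_m\Big)+\sum_{j=1}^{m-1}E_m[\tau_j/\ell]\,s_{\mathcal P}(j)$, and $m_{\mathrm{opt}}(n;\mathcal M)$ is the smallest $m\in\{1,\dots,n\}$ minimizing $F(m;n)$. *)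

theory Defs
  imports "HOL-Analysis.Analysis"
begin

text \<open>Objects X_1,...,X_n are represented by the naturals 0,...,n-1.
  chiset n m is the set of sequences chi (as lists) with exactly m distinct
  entries whose last entry does not occur earlier.\<close>
definition chiset :: "nat \<Rightarrow> nat \<Rightarrow> nat list set" where
  "chiset n m = {xs. xs \<noteq> [] \<and> set xs \<subseteq> {..<n} \<and> card (set xs) = m
                     \<and> last xs \<notin> set (butlast xs)}"

definition Em :: "nat \<Rightarrow> nat \<Rightarrow> (nat list \<Rightarrow> real) \<Rightarrow> real" where
  "Em n m f = (\<Sum>\<^sub>\<infinity>xs\<in>chiset n m. f xs * (1 / real n) ^ length xs)"

definition tj :: "nat \<Rightarrow> nat list \<Rightarrow> nat" where
  "tj j xs = (LEAST t. card (set (take t xs)) = j)"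

definition tauj :: "nat \<Rightarrow> nat list \<Rightarrow> nat" where
  "tauj j xs = tj (j + 1) xs - tj j xs - 1"

definition bb :: "nat \<Rightarrow> real" where
  "bb j = (1 + 1 / real j) * log 2 (real j + 1) - 1"

definition bf :: "nat \<Rightarrow> real" where
  "bf j = log 2 (real j + 1)"

definition ss :: "nat \<Rightarrow> real" where
  "ss j = (real j + 1) / 2"

datatype model = M1 | M2 | M3 | M4

fun sL :: "model \<Rightarrow> nat \<Rightarrow> nat \<Rightarrow> real" where
  "sL M1 n k = bb k"
| "sL M2 n k = bb n"
| "sL M3 n k = bb k"
| "sL M4 n k = bb n"

fun sP :: "model \<Rightarrow> nat \<Rightarrow> nat \<Rightarrow> real" where
  "sP M1 n j = bf (n - j) + ss j"
| "sP M2 n j = bf n + ss j"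
| "sP M3 n j = ss j"
| "sP M4 n j = ss j"

fun Cm :: "model \<Rightarrow> nat \<Rightarrow> nat \<Rightarrow> real" where
  "Cm M1 n m = (\<Sum>j=1..m. bf (n - j))"
| "Cm M2 n m = real m * bb n"
| "Cm M3 n m = (\<Sum>j=1..m. bf (n - j))"
| "Cm M4 n m = real m * bb n"

definition Fcost :: "model \<Rightarrow> nat \<Rightarrow> nat \<Rightarrow> real" where
  "Fcost M m n =
     Em n m (\<lambda>xs. 1 / real (length xs)) * ((\<Sum>j=0..m-1. sL M n (n - j)) + Cm M n m)
     + (\<Sum>j=1..m-1. Em n m (\<lambda>xs. real (tauj j xs) / real (length xs)) * sP M n j)"

definition m_opt :: "nat \<Rightarrow> model \<Rightarrow> nat" where
  "m_opt n M = (LEAST m. m \<in> {1..n} \<and> (\<forall>k\<in>{1..n}. Fcost M m n \<le> Fcost M k n))"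

end

theory Submission
  imports Defs
begin


abbreviation rp :: "nat \<Rightarrow> nat \<Rightarrow> nat \<Rightarrow> nat list" where
  "rp k a b \<equiv> replicate (Suc k) a @ [b]"

declare replicate.simps(2)[simp del]
lemma set_rp[simp]: "set (rp k a b) = {a,b}" by auto

lemma chiset2: "chiset n 2 = (\<Union>p\<in>{p. fst p < n \<and> snd p < n \<and> fst p \<noteq> snd p}. range (\<lambda>k. rp k (fst p) (snd p)))"
proof (rule set_eqI, rule iffI)
  fix xs assume xs: "xs \<in> chiset n 2"
  hence ne: "xs \<noteq> []" and sub: "set xs \<subseteq> {..<n}" and c: "card (set xs) = 2"
    and lb: "last xs \<notin> set (butlast xs)" by (auto simp: chiset_def)
  define ys where "ys = butlast xs"
  define b where "b = last xs"
  have xe: "xs = ys @ [b]" using ne by (simp add: ys_def b_def)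
  have bn: "b \<notin> set ys" using lb by (simp add: ys_def b_def)
  have "card (set ys) = 1" using c bn by (simp add: xe)
  then obtain a where sa: "set ys = {a}" by (auto simp: card_Suc_eq)
  then have "ys \<noteq> []" by auto
  then obtain k where lk: "length ys = Suc k" by (cases ys) auto
  have "replicate (length ys) a = ys" by (rule replicate_length_same) (use sa in auto)
  hence ye: "ys = replicate (Suc k) a" using lk by simp
  have "a < n" "b < n" "a \<noteq> b" using sub sa bn by (auto simp: xe)
  thus "xs \<in> (\<Union>p\<in>{p. fst p < n \<and> snd p < n \<and> fst p \<noteq> snd p}. range (\<lambda>k. rp k (fst p) (snd p)))"
    using xe ye by (intro UN_I[of "(a,b)"]) auto
next
  fix xs assume "xs \<in> (\<Union>p\<in>{p. fst p < n \<and> snd p < n \<and> fst p \<noteq> snd p}. range (\<lambda>k. rp k (fst p) (snd p)))"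
  then obtain a b k where "a < n" "b < n" "a \<noteq> b" "xs = rp k a b" by auto
  thus "xs \<in> chiset n 2" by (auto simp: chiset_def butlast_append)
qed

lemma take_rp: "take t (rp k a b) = (if t \<le> Suc k then replicate t a else rp k a b)"
  by (auto simp: take_append min_def)

lemma tj1: "tj 1 (rp k a b) = 1"
  unfolding tj_def
proof (rule Least_equality)
  show "card (set (take 1 (rp k a b))) = 1" by simp
  fix t assume "card (set (take t (rp k a b))) = 1"
  thus "1 \<le> t" by (cases t) auto
qed

lemma tj2: assumes "a \<noteq> b" shows "tj 2 (rp k a b) = k + 2"
  unfolding tj_def
proof (rule Least_equality)
  show "card (set (take (k+2) (rp k a b))) = 2" using assms by (simp add: take_rp)
  fix t assume h: "card (set (take t (rp k a b))) = 2"
  show "k + 2 \<le> t"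
  proof (rule ccontr)
    assume "\<not> k + 2 \<le> t"
    hence "t \<le> Suc k" by simp
    hence "set (take t (rp k a b)) \<subseteq> {a}" by (simp add: take_rp set_replicate_conv_if)
    hence "card (set (take t (rp k a b))) \<le> 1" using card_mono[of "{a}"] by fastforce
    thus False using h by simp
  qed
qed

lemma tau1: assumes "a \<noteq> b" shows "tauj 1 (rp k a b) = k"
  unfolding tauj_def one_add_one tj1 tj2[OF assms] by simp

lemma em2:
  fixes f :: "nat list \<Rightarrow> real"
  assumes fg: "\<And>k a b. a \<noteq> b \<Longrightarrow> f (rp k a b) = g k"
    and hs: "((\<lambda>k. g k * (1 / real n) ^ (k+2)) has_sum S) UNIV"
  shows "Em n 2 f = real (n * n - n) * S"
proof -
  let ?P = "{p::nat\<times>nat. fst p < n \<and> snd p < n \<and> fst p \<noteq> snd p}"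
  let ?B = "\<lambda>p. range (\<lambda>k. rp k (fst p) (snd p))"
  let ?phi = "\<lambda>xs. f xs * (1 / real n) ^ length xs"
  have finP: "finite ?P"
    by (rule finite_subset[of _ "{..<n} \<times> {..<n}"]) auto
  have each: "(?phi has_sum S) (?B p)" if "p \<in> ?P" for p
  proof -
    have inj: "inj_on (\<lambda>k. rp k (fst p) (snd p)) UNIV"
      by (rule injI) (metis length_append length_replicate nat.inject list.size(4) add_right_cancel)
    have "((?phi \<circ> (\<lambda>k. rp k (fst p) (snd p))) has_sum S) UNIV"
      using hs that by (simp add: o_def fg)
    thus ?thesis using has_sum_reindex[OF inj] by blast
  qed
  have disj: "?B p \<inter> ?B p' = {}" if "p \<in> ?P" "p' \<in> ?P" "p \<noteq> p'" for p p'
  proof (rule ccontr)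
    assume "?B p \<inter> ?B p' \<noteq> {}"
    then obtain k k' where e: "rp k (fst p) (snd p) = rp k' (fst p') (snd p')" by auto
    hence "snd p = snd p'" by (metis last_snoc)
    moreover have "fst p = fst p'" using arg_cong[OF e, of hd] by simp
    ultimately show False using that by (simp add: prod_eq_iff)
  qed
  have "(?phi has_sum (\<Sum>p\<in>?P. S)) (\<Union>p\<in>?P. ?B p)"
    by (rule sum_has_sum[OF finP each disj])
  hence "Em n 2 f = (\<Sum>p\<in>?P. S)" unfolding Em_def chiset2 by (rule infsumI)
  also have "card ?P = n * n - n"
  proof -
    have "?P = ({..<n} \<times> {..<n}) - (\<lambda>a. (a,a)) ` {..<n}" by auto
    moreover have "card ((\<lambda>a. (a,a)) ` {..<n}) = n" by (subst card_image) (auto intro: inj_onI)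
    ultimately show ?thesis by (simp only:) (subst card_Diff_subset, auto simp: card_cartesian_product)
  qed
  ultimately show ?thesis by simp
qed

lemma em1:
  fixes f :: "nat list \<Rightarrow> real"
  shows "Em n 1 f = (\<Sum>x<n. f [x] * (1 / real n))"
proof -
  have "chiset n 1 = (\<lambda>x. [x]) ` {..<n}"
  proof (rule set_eqI, rule iffI)
    fix xs assume "xs \<in> chiset n 1"
    hence ne: "xs \<noteq> []" and sub: "set xs \<subseteq> {..<n}" and c: "card (set xs) = 1"
      and lb: "last xs \<notin> set (butlast xs)" by (auto simp: chiset_def)
    have xe: "xs = butlast xs @ [last xs]" using ne by simp
    have "butlast xs = []"
    proof (rule ccontr)
      assume "butlast xs \<noteq> []"
      then obtain y where "y \<in> set (butlast xs)" by (cases "butlast xs") auto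
      hence "{y, last xs} \<subseteq> set xs" "y \<noteq> last xs" using lb xe ne by (auto dest: in_set_butlastD)
      hence "card {y, last xs} \<le> card (set xs)" by (intro card_mono) auto
      thus False using c \<open>y \<noteq> last xs\<close> by simp
    qed
    hence "xs = [last xs]" using xe by simp
    thus "xs \<in> (\<lambda>x. [x]) ` {..<n}" using sub by (metis image_eqI last_in_set ne subsetD)
  qed (auto simp: chiset_def)
  thus ?thesis unfolding Em_def by (simp add: sum.reindex inj_on_def)
qed



lemma series:
  fixes n :: nat assumes n2: "n \<ge> 2"
  defines "q \<equiv> 1 / real n"
  shows "\<exists>T. ((\<lambda>k. 1 / real (k+2) * q ^ (k+2)) has_sum T) UNIV
           \<and> ((\<lambda>k. real k / real (k+2) * q ^ (k+2)) has_sum (q^2/(1-q) - 2*T)) UNIV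
           \<and> 0 \<le> T \<and> T \<le> q^2/2 + q^3/(3*(1-q))"
proof -
  have q0: "0 < q" and q1: "q \<le> 1/2" using n2 by (auto simp: q_def field_simps)
  have geo: "(\<lambda>k. q^k) sums (1/(1-q))" by (rule geometric_sums) (use q0 q1 in auto)
  have geo2: "(\<lambda>k. q^(k+2)) sums (q^2/(1-q))"
  proof -
    have "(\<lambda>k. q^(k+2)) = (\<lambda>k. q^2 * q^k)" by (rule ext) (simp add: power_add power2_eq_square mult_ac)
    thus ?thesis using sums_mult[OF geo, of "q^2"] by simp
  qed
  let ?a = "\<lambda>k. 1 / real (k+2) * q ^ (k+2)"
  have sa: "summable ?a"
  proof (rule summable_comparison_test')
    show "summable (\<lambda>k. q^(k+2))" using geo2 by (rule sums_summable)
    fix k :: nat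
    have "1 / real (k+2) \<le> 1" by simp
    hence "?a k \<le> 1 * q^(k+2)" using q0 by (intro mult_right_mono) auto
    moreover have "norm (?a k) = ?a k" using q0 by simp
    ultimately show "norm (?a k) \<le> q^(k+2)" by simp
  qed
  define T where "T = suminf ?a"
  have aT: "?a sums T" using sa by (simp add: T_def summable_sums)
  have a0: "\<And>k. 0 \<le> ?a k" using q0 by simp
  have h1: "(?a has_sum T) UNIV" by (rule sums_nonneg_imp_has_sum[OF aT a0])
  have "(\<lambda>k. q^(k+2) - 2 * ?a k) sums (q^2/(1-q) - 2*T)"
    by (rule sums_diff[OF geo2 sums_mult[OF aT]])
  moreover have "\<And>k. q^(k+2) - 2 * ?a k = real k / real (k+2) * q ^ (k+2)"
    by (simp add: field_simps)
  ultimately have bs: "(\<lambda>k. real k / real (k+2) * q ^ (k+2)) sums (q^2/(1-q) - 2*T)" by simp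
  have h2: "((\<lambda>k. real k / real (k+2) * q ^ (k+2)) has_sum (q^2/(1-q) - 2*T)) UNIV"
    by (rule sums_nonneg_imp_has_sum[OF bs]) (use q0 in simp)
  have T0: "0 \<le> T" unfolding T_def by (rule suminf_nonneg[OF sa a0])
  have geo3: "(\<lambda>k. q^(k+3)/3) sums (q^3/(3*(1-q)))"
  proof -
    have "(\<lambda>k. q^(k+3)/3) = (\<lambda>k. q^3/3 * q^k)" by (simp add: power_add mult.commute)
    thus ?thesis using sums_mult[OF geo, of "q^3/3"] by simp
  qed
  have "(\<Sum>k. ?a (Suc k)) \<le> (\<Sum>k. q^(k+3)/3)"
  proof (rule suminf_le)
    fix k :: nat
    have "1 / real (Suc k + 2) \<le> 1/3" by (simp add: field_simps)
    hence "1 / real (Suc k + 2) * q^(Suc k + 2) \<le> 1/3 * q^(Suc k+2)"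
      using q0 by (intro mult_right_mono) auto
    thus "?a (Suc k) \<le> q^(k+3)/3" by (simp add: numeral_3_eq_3)
    show "summable (\<lambda>k. ?a (Suc k))" using sa by (subst summable_Suc_iff)
    show "summable (\<lambda>k. q^(k+3)/3)" using geo3 by (rule sums_summable)
  qed
  hence "T - ?a 0 \<le> q^3/(3*(1-q))" using suminf_split_head[OF sa] geo3 by (simp add: T_def sums_iff)
  hence "T \<le> q^2/2 + q^3/(3*(1-q))" by (simp add: power2_eq_square)
  with h1 h2 T0 show ?thesis by blast
qed

lemma log_gt:
  fixes x :: real and p q :: nat
  assumes "0 < x" "2^p < x^q" "0 < q"
  shows "real p / real q < log 2 x"
proof -
  have "real p = log 2 (2^p)" by (simp add: log_nat_power)
  also have "\<dots> < log 2 (x^q)" using assms by (subst log_less_cancel_iff) auto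
  also have "\<dots> = real q * log 2 x" using assms by (simp add: log_nat_power)
  finally show ?thesis using assms by (simp add: field_simps)
qed

lemma bb_gt1: assumes "n \<ge> 2" shows "bb n > 1"
proof -
  have pw: "(2::real)^(2*n) < (real n + 1)^(n+1)"
  proof (cases "n = 2")
    case True thus ?thesis by simp
  next
    case False
    hence n3: "n \<ge> 3" using assms by simp
    have "(2::real)^(2*n) = 4^n" by (simp add: power_mult)
    also have "\<dots> < 4^(n+1)" by simp
    also have "\<dots> \<le> (real n + 1)^(n+1)" using n3 by (intro power_mono) auto
    finally show ?thesis .
  qed
  have "real (2*n) / real (n+1) < log 2 (real n + 1)"
    by (rule log_gt) (use pw in \<open>auto simp: power_mult\<close>)
  hence L: "2*real n / (real n + 1) < log 2 (real n + 1)" by (simp add: add.commute)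
  have "(1 + 1/real n) * log 2 (real n + 1) > (1 + 1/real n) * (2*real n / (real n + 1))"
  proof -
    have "1/real n \<ge> 0" "2/real n \<ge> 0" by simp_all
    hence "0 < 1 + 1/real n" "0 < 1 + 2/real n" by linarith+
    thus ?thesis using L by (intro mult_strict_left_mono) auto
  qed
  moreover have "(1 + 1/real n) * (2*real n / (real n + 1)) = 2"
  proof -
    have p: "real n > 0" using assms by simp
    hence "real n * real n > 0" by simp
    hence "real n + real n * real n \<noteq> 0" using p by linarith
    thus ?thesis using p by (simp add: field_simps)
  qed
  ultimately show ?thesis by (simp add: bb_def)
qed

lemma M2fact: assumes "n \<ge> 2" shows "2 * bb n - bf n - 1 > 0"
proof -
  have pw: "(2::real)^(3*n) < (real n + 1)^(n+2)"
  proof (cases "n \<ge> 7")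
    case True
    have "(2::real)^(3*n) = 8^n" by (simp add: power_mult)
    also have "\<dots> < 8^(n+2)" by simp
    also have "\<dots> \<le> (real n + 1)^(n+2)" using True by (intro power_mono) auto
    finally show ?thesis .
  next
    case False
    hence "n = 2 \<or> n = 3 \<or> n = 4 \<or> n = 5 \<or> n = 6" using assms by auto
    thus ?thesis by auto
  qed
  have "real (3*n) / real (n+2) < log 2 (real n + 1)"
    by (rule log_gt) (use pw in \<open>auto simp: power_mult\<close>)
  hence L: "3*real n / (real n + 2) < log 2 (real n + 1)" by (simp add: add.commute)
  have "(1 + 2/real n) * log 2 (real n + 1) > (1 + 2/real n) * (3*real n / (real n + 2))"
  proof -
    have "1/real n \<ge> 0" "2/real n \<ge> 0" by simp_all
    hence "0 < 1 + 1/real n" "0 < 1 + 2/real n" by linarith+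
    thus ?thesis using L by (intro mult_strict_left_mono) auto
  qed
  moreover have "(1 + 2/real n) * (3*real n / (real n + 2)) = 3"
  proof -
    have p: "real n > 0" using assms by simp
    hence "real n * real n > 0" by simp
    hence "real n * real n + real n * 2 \<noteq> 0" using p by linarith
    thus ?thesis using p by (simp add: field_simps)
  qed
  ultimately have "(1 + 2/real n) * log 2 (real n + 1) > 3" by simp
  thus ?thesis by (simp add: bb_def bf_def algebra_simps)
qed

lemma bb_mono: assumes "n \<ge> 2" shows "bb (n-1) \<le> bb n"
proof -
  define x where "x = real (n-1)"
  have x1: "x \<ge> 1" using assms by (simp add: x_def)
  have nx: "real n = x + 1" using assms by (simp add: x_def)
  define u where "u = ln (x+1)"
  define w where "w = ln (x+2)"
  have "ln ((x+1)/(x+2)) \<le> (x+1)/(x+2) - 1" using x1 by (intro ln_le_minus_one) auto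
  hence "u - w \<le> -1/(x+2)" using x1 by (simp add: u_def w_def ln_div field_simps)
  hence wu: "w \<ge> u + 1/(x+2)" by simp
  have ux: "u \<le> x" using ln_add_one_self_le_self[of x] x1 by (simp add: u_def add.commute)
  have u0: "u \<ge> 0" using x1 by (simp add: u_def)
  have "x*(x+2)*w \<ge> x*(x+2)*(u + 1/(x+2))" using wu x1 by (intro mult_left_mono) auto
  also have "x*(x+2)*(u + 1/(x+2)) = x*(x+2)*u + x" using x1 by (simp add: field_simps)
  finally have k: "x*(x+2)*w \<ge> (x+1)^2*u" using ux by (simp add: power2_eq_square algebra_simps)
  have "(1 + 1/x) * u \<le> (1 + 1/(x+1)) * w"
  proof -
    have "(x+1)^2*u / (x*(x+1)) = ((x+1)*((x+1)*u)) / ((x+1)*x)" by (simp add: power2_eq_square mult_ac)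
    also have "\<dots> = (x+1)*u / x" using x1 by (subst mult_divide_mult_cancel_left) auto
    also have "\<dots> = (1 + 1/x) * u" using x1 by (simp add: field_simps)
    finally have "(1 + 1/x) * u = (x+1)^2*u / (x*(x+1))" by simp
    also have "\<dots> \<le> x*(x+2)*w / (x*(x+1))" using k x1 by (intro divide_right_mono) auto
    also have "\<dots> = (x*((x+2)*w)) / (x*(x+1))" by (simp add: mult_ac)
    also have "\<dots> = ((x+2)*w) / (x+1)" using x1 by (subst mult_divide_mult_cancel_left) auto
    also have "\<dots> = (1 + 1/(x+1)) * w" using x1 by (simp add: field_simps)
    finally show ?thesis .
  qed
  hence "(1 + 1/x) * u / ln 2 \<le> (1 + 1/(x+1)) * w / ln 2" by (intro divide_right_mono) auto
  moreover have "bb (n-1) = (1 + 1/x) * u / ln 2 - 1"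
    unfolding bb_def log_def u_def x_def by simp
  moreover have "bb n = (1 + 1/(x+1)) * w / ln 2 - 1"
  proof -
    have "real n + 1 = x + 2" using nx by simp
    thus ?thesis unfolding bb_def log_def w_def nx by (simp add: add.commute)
  qed
  ultimately show ?thesis by linarith
qed


lemma l1: fixes N :: real assumes N: "N \<ge> 2"
  shows "(N*N - N)*((1/N)^2/2 + (1/N)^3/(3*(1-1/N))) = (N-1)/(2*N) + 1/(3*N)"
proof -
  have a: "1 - 1/N = (N-1)/N" using N by (simp add: field_simps)
  have b: "(1/N)^3/(3*((N-1)/N)) = 1/(3*N*N*(N-1))" using N by (simp add: field_simps power3_eq_cube)
  have c: "(N*N - N) = N*(N-1)" by (simp add: algebra_simps)
  have d: "N*(N-1)*(1/(3*N*N*(N-1))) = 1/(3*N)" using N by (simp add: field_simps)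
  have e: "N*(N-1)*((1/N)^2/2) = (N-1)/(2*N)" using N by (simp add: field_simps power2_eq_square)
  show ?thesis unfolding a b c by (simp only: distrib_left d e)
qed
lemma l2: fixes N :: real assumes N: "N \<ge> 2"
  shows "(N*N - N)*((1/N)^2/(1-1/N)) = 1"
proof -
  have a: "1 - 1/N = (N-1)/N" using N by (simp add: field_simps)
  have b: "(1/N)^2/((N-1)/N) = 1/(N*(N-1))" using N by (simp add: field_simps power2_eq_square)
  have c: "(N*N - N) = N*(N-1)" by (simp add: algebra_simps)
  show ?thesis unfolding a b c using N by simp
qed

lemma CM: "Cm M1 n 1 = bf (n-1)" "Cm M3 n 1 = bf (n-1)" "Cm M2 n 1 = bb n" "Cm M4 n 1 = bb n"
  "Cm M1 n 2 = bf (n-1) + bf (n-2)" "Cm M3 n 2 = bf (n-1) + bf (n-2)" "Cm M2 n 2 = 2 * bb n" "Cm M4 n 2 = 2 * bb n"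
  by (simp_all add: numeral_2_eq_2)
lemma Fgen: "Fcost M 1 n = Em n 1 (\<lambda>xs. 1 / real (length xs)) * (sL M n n + Cm M n 1)"
  "Fcost M 2 n = Em n 2 (\<lambda>xs. 1 / real (length xs)) * (sL M n n + sL M n (n-1) + Cm M n 2)
     + Em n 2 (\<lambda>xs. real (tauj 1 xs) / real (length xs)) * sP M n 1"
  by (simp_all add: Fcost_def numeral_2_eq_2)
lemma alg1: fixes A b1 b0 f1 f2 :: real
  shows "(b1 + f1) - (A*(b1 + b0 + (f1 + f2)) + (1-2*A)*(f1 + 1)) = (1-2*A)*(b1 - 1) + A*(b1 - b0) + A*(f1 - f2)"
  by (simp add: algebra_simps)
lemma alg2: fixes A b1 f :: real
  shows "(b1 + b1) - (A*(b1 + b1 + 2*b1) + (1-2*A)*(f + 1)) = (1-2*A)*(2*b1 - f - 1)"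
  by (simp add: algebra_simps)
lemma alg3: fixes A b1 b0 f1 f2 :: real
  shows "(b1 + f1) - (A*(b1 + b0 + (f1 + f2)) + (1-2*A)*1) = (1-2*A)*(b1 - 1) + A*(b1 - b0) + ((1-A)*f1 - A*f2)"
  by (simp add: algebra_simps)
lemma alg4: fixes A b1 :: real
  shows "(b1 + b1) - (A*(b1 + b1 + 2*b1) + (1-2*A)*1) = (1-2*A)*(2*b1 - 1)"
  by (simp add: algebra_simps)
lemma F_less:
  assumes n2: "n \<ge> 2" shows "Fcost M 2 n < Fcost M 1 n"
proof -
  define q where "q = 1 / real n"
  obtain T where h1: "((\<lambda>k. 1 / real (k+2) * q ^ (k+2)) has_sum T) UNIV"
    and h2: "((\<lambda>k. real k / real (k+2) * q ^ (k+2)) has_sum (q^2/(1-q) - 2*T)) UNIV"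
    and T0: "0 \<le> T" and Tle: "T \<le> q^2/2 + q^3/(3*(1-q))"
    using series[OF n2] unfolding q_def by blast
  define c where "c = real (n * n - n)"
  have N: "real n \<ge> 2" using n2 by simp
  have cN: "c = real n * real n - real n" using n2 by (simp add: c_def of_nat_diff)
  define A where "A = Em n 2 (\<lambda>xs. 1 / real (length xs))"
  define B where "B = Em n 2 (\<lambda>xs. real (tauj 1 xs) / real (length xs))"
  have A: "A = c * T" unfolding A_def c_def
    by (rule em2[where g = "\<lambda>k. 1 / real (k+2)"]) (use h1 q_def in auto)
  have B: "B = c * (q^2/(1-q) - 2*T)" unfolding B_def c_def
    by (rule em2[where g = "\<lambda>k. real k / real (k+2)"]) (use h2 q_def tau1 in auto)
  have c1: "c * (q^2/(1-q)) = 1" unfolding cN q_def by (rule l2[OF N])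
  have b2: "B = c*(q^2/(1-q)) - c*(2*T)" using B by (simp only: right_diff_distrib)
  have b3: "c*(2*T) = 2*A" using A by simp
  have B1: "B = 1 - 2*A" using b2 b3 c1 by linarith
  have c0: "c \<ge> 0" unfolding c_def by (rule of_nat_0_le_iff)
  have A0: "A \<ge> 0" using A c0 T0 by simp
  have "A \<le> c * (q^2/2 + q^3/(3*(1-q)))" using A c0 Tle by (simp add: mult_left_mono)
  also have "\<dots> = (real n - 1)/(2*real n) + 1/(3*real n)" unfolding cN q_def by (rule l1[OF N])
  also have "\<dots> < 1/2"
  proof -
    have "(real n - 1)/(2*real n) = 1/2 - 1/(2*real n)" using N by (simp add: diff_divide_distrib)
    moreover have "1/(3*real n) < 1/(2*real n)" using N by (simp add: frac_less2)
    ultimately show ?thesis by linarith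
  qed
  finally have Ah: "A < 1/2" .
  have E1: "Em n 1 (\<lambda>xs. 1 / real (length xs)) = 1" unfolding em1 using N by simp
  have F1: "Fcost M 1 n = sL M n n + Cm M n 1" unfolding Fgen E1 by simp
  have F2: "Fcost M 2 n = A * (sL M n n + sL M n (n-1) + Cm M n 2) + (1 - 2*A) * sP M n 1"
    by (simp only: Fgen A_def[symmetric] B_def[symmetric] B1)
  have bb1: "bb n > 1" by (rule bb_gt1[OF n2])
  have pos: "1 - 2*A > 0" using Ah by simp
  have ss1: "ss 1 = 1" by (simp add: ss_def)
  show ?thesis
  proof (cases M)
    case M1
    have bm: "bb (n-1) \<le> bb n" by (rule bb_mono[OF n2])
    have bfm: "bf (n-2) \<le> bf (n-1)" using n2 by (simp add: bf_def)
    have "Fcost M 1 n - Fcost M 2 n = (1-2*A)*(bb n - 1) + A*(bb n - bb (n-1)) + A*(bf (n-1) - bf (n-2))"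
      unfolding F1 F2 unfolding M1 sL.simps sP.simps CM ss1 by (rule alg1)
    moreover have "(1-2*A)*(bb n - 1) > 0" using pos bb1 by simp
    moreover have "A*(bb n - bb (n-1)) \<ge> 0" using A0 bm by simp
    moreover have "A*(bf (n-1) - bf (n-2)) \<ge> 0" using A0 bfm by simp
    ultimately show ?thesis by linarith
  next
    case M2
    have "Fcost M 1 n - Fcost M 2 n = (1-2*A)*(2*bb n - bf n - 1)"
      unfolding F1 F2 unfolding M2 sL.simps sP.simps CM ss1 by (rule alg2)
    moreover have "(1-2*A)*(2*bb n - bf n - 1) > 0" using pos M2fact[OF n2] by simp
    ultimately show ?thesis by linarith
  next
    case M3
    have bm: "bb (n-1) \<le> bb n" by (rule bb_mono[OF n2])
    have bfm: "bf (n-2) \<le> bf (n-1)" using n2 by (simp add: bf_def)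
    have bf0: "bf (n-2) \<ge> 0" by (simp add: bf_def)
    have "Fcost M 1 n - Fcost M 2 n = (1-2*A)*(bb n - 1) + A*(bb n - bb (n-1)) + ((1-A)*bf (n-1) - A*bf (n-2))"
      unfolding F1 F2 unfolding M3 sL.simps sP.simps CM ss1 by (rule alg3)
    moreover have "(1-2*A)*(bb n - 1) > 0" using pos bb1 by simp
    moreover have "A*(bb n - bb (n-1)) \<ge> 0" using A0 bm by simp
    moreover have "(1-A)*bf (n-1) \<ge> A*bf (n-2)"
    proof -
      have "A*bf (n-2) \<le> A * bf (n-1)" using A0 bfm by (simp add: mult_left_mono)
      also have "\<dots> \<le> (1-A)*bf(n-1)" using Ah bfm bf0 by (intro mult_right_mono) auto
      finally show ?thesis .
    qed
    ultimately show ?thesis by linarith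
  next
    case M4
    have "Fcost M 1 n - Fcost M 2 n = (1-2*A)*(2*bb n - 1)"
      unfolding F1 F2 unfolding M4 sL.simps sP.simps CM ss1 by (rule alg4)
    moreover have "(1-2*A)*(2*bb n - 1) > 0" using pos bb1 by simp
    ultimately show ?thesis by linarith
  qed
qed

theorem proposition1:
  fixes M :: model and n :: nat
  assumes "n \<ge> 2"
  shows "m_opt n M > 1 \<and> (\<exists>m\<in>{2..n}. Fcost M m n < Fcost M 1 n)"
proof -
  have lt: "Fcost M 2 n < Fcost M 1 n" by (rule F_less[OF assms])
  have "\<exists>m\<in>{1..n}. \<forall>k\<in>{1..n}. Fcost M m n \<le> Fcost M k n"
  proof -
    have "finite ((\<lambda>k. Fcost M k n) ` {1..n})" "(\<lambda>k. Fcost M k n) ` {1..n} \<noteq> {}" using assms by auto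
    then obtain m where "m \<in> {1..n}" "Fcost M m n = Min ((\<lambda>k. Fcost M k n) ` {1..n})"
      by (metis (no_types, lifting) Min_in imageE)
    thus ?thesis by (intro bexI[of _ m]) auto
  qed
  then obtain m where "m \<in> {1..n} \<and> (\<forall>k\<in>{1..n}. Fcost M m n \<le> Fcost M k n)" by blast
  hence P: "m_opt n M \<in> {1..n} \<and> (\<forall>k\<in>{1..n}. Fcost M (m_opt n M) n \<le> Fcost M k n)"
    unfolding m_opt_def by (rule LeastI)
  have "m_opt n M \<noteq> 1"
  proof
    assume "m_opt n M = 1"
    hence "Fcost M 1 n \<le> Fcost M 2 n" using P assms by auto
    thus False using lt by simp
  qed
  hence "m_opt n M > 1" using P by auto
  moreover have "\<exists>m\<in>{2..n}. Fcost M m n < Fcost M 1 n" using lt assms by (intro bexI[of _ 2]) auto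
  ultimately show ?thesis by blast
qed


end
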